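(* Let $M$ be a simple $L$-module and $m\ge 1$. Suppose $d^m\in\operatorname{ann}M$, $d^{m-1}\notin\operatorname{ann}M$, and $f(h)d^{m-1}M=0$ for some nonconstant polynomial $f\in\mathbb C[x]$. Then $M$ is finite-dimensional. The same holds with $d$ replaced by $u$. In particular, if $d^m\in\operatorname{ann}M$, $d^{m-1}\notin\operatorname{ann}M$ and $d^mu-s^mud^m\neq 0$ in $L$, then $M$ is finite-dimensional; likewise if $u^m\in\operatorname{ann}M$, $u^{m-1}\notin\operatorname{ann}M$ and $du^m-s^mu^md\neq 0$ in $L$.
   Context: Let $r,s,\gamma\in\mathbb C$ with $rs\neq 0$ and $\phi\in\mathbb C[x]$. The generalized down-up algebra $L=L(\phi,r,s,\gamma)$ is the associative $\mathbb C$-algebra generated by $u,d,h$ subject to $hu-ruh=\gamma u$, $dh-rhd=\gamma d$, $du-sud=\phi(h)$; it is a domain with basis $\{u^ih^jd^k\}$. Modules are left modules; $\operatorname{ann}M$ is the annihilator of $M$ in $L$ (with $d^0=u^0=1$). *)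

theory Defs
  imports Main "HOL-Computational_Algebra.Polynomial"
begin

datatype gen = GU | GD | GH

text \<open>Noncommutative polynomial expressions in u, d, h with complex coefficients
  (elements of the free algebra C<u,d,h>, up to the ring axioms).\<close>
datatype expr = Gen gen | Sc complex | Add expr expr | Mul expr expr

definition Sub :: "expr \<Rightarrow> expr \<Rightarrow> expr" where
  "Sub a b = Add a (Mul (Sc (-1)) b)"

fun pw :: "expr \<Rightarrow> nat \<Rightarrow> expr" where
  "pw a 0 = Sc 1"
| "pw a (Suc n) = Mul a (pw a n)"

fun horner :: "complex list \<Rightarrow> expr" where
  "horner [] = Sc 0"
| "horner (c # cs) = Add (Sc c) (Mul (Gen GH) (horner cs))"

definition hpoly :: "complex poly \<Rightarrow> expr" where
  "hpoly f = horner (coeffs f)"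

text \<open>Equality in L: the least congruence on expressions containing the axioms of a
  (unital associative) C-algebra and the defining relations
  hu - ruh = gamma u, dh - rhd = gamma d, du - sud = phi(h).\<close>
inductive eqL :: "complex poly \<Rightarrow> complex \<Rightarrow> complex \<Rightarrow> complex \<Rightarrow> expr \<Rightarrow> expr \<Rightarrow> bool"
  for \<phi> r s \<gamma> where
  refl: "eqL \<phi> r s \<gamma> a a"
| sym: "eqL \<phi> r s \<gamma> a b \<Longrightarrow> eqL \<phi> r s \<gamma> b a"
| trans: "eqL \<phi> r s \<gamma> a b \<Longrightarrow> eqL \<phi> r s \<gamma> b c \<Longrightarrow> eqL \<phi> r s \<gamma> a c"
| add_cong: "eqL \<phi> r s \<gamma> a a' \<Longrightarrow> eqL \<phi> r s \<gamma> b b' \<Longrightarrow> eqL \<phi> r s \<gamma> (Add a b) (Add a' b')"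
| mul_cong: "eqL \<phi> r s \<gamma> a a' \<Longrightarrow> eqL \<phi> r s \<gamma> b b' \<Longrightarrow> eqL \<phi> r s \<gamma> (Mul a b) (Mul a' b')"
| add_assoc: "eqL \<phi> r s \<gamma> (Add (Add a b) c) (Add a (Add b c))"
| add_comm: "eqL \<phi> r s \<gamma> (Add a b) (Add b a)"
| add_zero: "eqL \<phi> r s \<gamma> (Add a (Sc 0)) a"
| add_neg: "eqL \<phi> r s \<gamma> (Add a (Mul (Sc (-1)) a)) (Sc 0)"
| mul_assoc: "eqL \<phi> r s \<gamma> (Mul (Mul a b) c) (Mul a (Mul b c))"
| mul_one_left: "eqL \<phi> r s \<gamma> (Mul (Sc 1) a) a"
| mul_one_right: "eqL \<phi> r s \<gamma> (Mul a (Sc 1)) a"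
| distrib_left: "eqL \<phi> r s \<gamma> (Mul a (Add b c)) (Add (Mul a b) (Mul a c))"
| distrib_right: "eqL \<phi> r s \<gamma> (Mul (Add a b) c) (Add (Mul a c) (Mul b c))"
| sc_add: "eqL \<phi> r s \<gamma> (Add (Sc x) (Sc y)) (Sc (x + y))"
| sc_mul: "eqL \<phi> r s \<gamma> (Mul (Sc x) (Sc y)) (Sc (x * y))"
| sc_central: "eqL \<phi> r s \<gamma> (Mul (Sc x) a) (Mul a (Sc x))"
| rel_hu: "eqL \<phi> r s \<gamma> (Sub (Mul (Gen GH) (Gen GU)) (Mul (Sc r) (Mul (Gen GU) (Gen GH))))
                          (Mul (Sc \<gamma>) (Gen GU))"
| rel_dh: "eqL \<phi> r s \<gamma> (Sub (Mul (Gen GD) (Gen GH)) (Mul (Sc r) (Mul (Gen GH) (Gen GD))))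
                          (Mul (Sc \<gamma>) (Gen GD))"
| rel_du: "eqL \<phi> r s \<gamma> (Sub (Mul (Gen GD) (Gen GU)) (Mul (Sc s) (Mul (Gen GU) (Gen GD))))
                          (hpoly \<phi>)"

definition nonzeroL :: "complex poly \<Rightarrow> complex \<Rightarrow> complex \<Rightarrow> complex \<Rightarrow> expr \<Rightarrow> bool" where
  "nonzeroL \<phi> r s \<gamma> a \<longleftrightarrow> \<not> eqL \<phi> r s \<gamma> a (Sc 0)"

text \<open>A left module: a complex vector space (scalar multiplication sc) together with
  the operators by which u, d, h act.\<close>
fun act :: "(complex \<Rightarrow> 'v \<Rightarrow> 'v) \<Rightarrow> ('v \<Rightarrow> 'v) \<Rightarrow> ('v \<Rightarrow> 'v) \<Rightarrow> ('v \<Rightarrow> 'v)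
            \<Rightarrow> expr \<Rightarrow> 'v \<Rightarrow> 'v::ab_group_add" where
  "act sc U D H (Gen GU) = U"
| "act sc U D H (Gen GD) = D"
| "act sc U D H (Gen GH) = H"
| "act sc U D H (Sc c) = sc c"
| "act sc U D H (Add a b) = (\<lambda>v. act sc U D H a v + act sc U D H b v)"
| "act sc U D H (Mul a b) = (\<lambda>v. act sc U D H a (act sc U D H b v))"

definition is_L_module ::
  "complex poly \<Rightarrow> complex \<Rightarrow> complex \<Rightarrow> complex \<Rightarrow>
   (complex \<Rightarrow> 'v \<Rightarrow> 'v) \<Rightarrow> ('v \<Rightarrow> 'v) \<Rightarrow> ('v \<Rightarrow> 'v) \<Rightarrow> ('v \<Rightarrow> 'v::ab_group_add) \<Rightarrow> bool" where
  "is_L_module \<phi> r s \<gamma> sc U D H \<longleftrightarrow>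
     vector_space sc \<and> Vector_Spaces.linear sc sc U \<and> Vector_Spaces.linear sc sc D \<and>
     Vector_Spaces.linear sc sc H \<and>
     act sc U D H (Sub (Mul (Gen GH) (Gen GU)) (Mul (Sc r) (Mul (Gen GU) (Gen GH))))
       = act sc U D H (Mul (Sc \<gamma>) (Gen GU)) \<and>
     act sc U D H (Sub (Mul (Gen GD) (Gen GH)) (Mul (Sc r) (Mul (Gen GH) (Gen GD))))
       = act sc U D H (Mul (Sc \<gamma>) (Gen GD)) \<and>
     act sc U D H (Sub (Mul (Gen GD) (Gen GU)) (Mul (Sc s) (Mul (Gen GU) (Gen GD))))
       = act sc U D H (hpoly \<phi>)"

definition is_simple_L_module ::
  "complex poly \<Rightarrow> complex \<Rightarrow> complex \<Rightarrow> complex \<Rightarrow>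
   (complex \<Rightarrow> 'v \<Rightarrow> 'v) \<Rightarrow> ('v \<Rightarrow> 'v) \<Rightarrow> ('v \<Rightarrow> 'v) \<Rightarrow> ('v \<Rightarrow> 'v::ab_group_add) \<Rightarrow> bool" where
  "is_simple_L_module \<phi> r s \<gamma> sc U D H \<longleftrightarrow>
     is_L_module \<phi> r s \<gamma> sc U D H \<and> (UNIV :: 'v set) \<noteq> {0} \<and>
     (\<forall>W. module.subspace sc W \<and> (\<forall>w\<in>W. U w \<in> W \<and> D w \<in> W \<and> H w \<in> W)
          \<longrightarrow> W = {0} \<or> W = UNIV)"

text \<open>The annihilator of M in L (a set of representatives in the free algebra).\<close>
definition annL ::
  "(complex \<Rightarrow> 'v \<Rightarrow> 'v) \<Rightarrow> ('v \<Rightarrow> 'v) \<Rightarrow> ('v \<Rightarrow> 'v) \<Rightarrow> ('v \<Rightarrow> 'v::ab_group_add) \<Rightarrow> expr set" where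
  "annL sc U D H = {a. \<forall>v. act sc U D H a v = 0}"

definition fin_dim_module :: "(complex \<Rightarrow> 'v \<Rightarrow> 'v::ab_group_add) \<Rightarrow> bool" where
  "fin_dim_module sc \<longleftrightarrow> (\<exists>B. finite B \<and> module.span sc B = UNIV)"

end

theory Submission
  imports Defs "HOL-Computational_Algebra.Fundamental_Theorem_Algebra"
begin

context
  fixes \<phi> :: "complex poly" and r s \<gamma> :: complex
begin

abbreviation eqq (infix "\<approx>" 50) where "a \<approx> b \<equiv> eqL \<phi> r s \<gamma> a b"

lemma R: "a \<approx> a" by (rule eqL.refl)
lemma S: "a \<approx> b \<Longrightarrow> b \<approx> a" by (rule eqL.sym)
lemma T [trans]: "a \<approx> b \<Longrightarrow> b \<approx> c \<Longrightarrow> a \<approx> c" by (rule eqL.trans)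
lemma ACl: "a \<approx> a' \<Longrightarrow> Add a b \<approx> Add a' b" by (rule eqL.add_cong, assumption, rule R)
lemma ACr: "b \<approx> b' \<Longrightarrow> Add a b \<approx> Add a b'" by (rule eqL.add_cong, rule R, assumption)
lemma AC: "a \<approx> a' \<Longrightarrow> b \<approx> b' \<Longrightarrow> Add a b \<approx> Add a' b'" by (rule eqL.add_cong)
lemma MCl: "a \<approx> a' \<Longrightarrow> Mul a b \<approx> Mul a' b" by (rule eqL.mul_cong, assumption, rule R)
lemma MCr: "b \<approx> b' \<Longrightarrow> Mul a b \<approx> Mul a b'" by (rule eqL.mul_cong, rule R, assumption)
lemma sub_cong: "a \<approx> a' \<Longrightarrow> b \<approx> b' \<Longrightarrow> Sub a b \<approx> Sub a' b'"
  unfolding Sub_def by (intro AC MCr)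

lemma add_zero_l: "Add (Sc 0) a \<approx> a"
  using eqL.add_comm eqL.add_zero T by blast

lemma mul_sc0: "Mul (Sc 0) a \<approx> Sc 0"
proof -
  have e: "Add (Sc 1) (Sc (-1)) \<approx> Sc 0" using eqL.sc_add[of \<phi> r s \<gamma> 1 "-1"] by simp
  have "Mul (Sc 0) a \<approx> Mul (Add (Sc 1) (Sc (-1))) a" by (rule MCl, rule S, rule e)
  also have "\<dots> \<approx> Add (Mul (Sc 1) a) (Mul (Sc (-1)) a)" by (rule eqL.distrib_right)
  also have "\<dots> \<approx> Add a (Mul (Sc (-1)) a)" by (rule ACl, rule eqL.mul_one_left)
  also have "\<dots> \<approx> Sc 0" by (rule eqL.add_neg)
  finally show ?thesis .
qed

lemma mul_0r: "Mul a (Sc 0) \<approx> Sc 0"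
  using S[OF eqL.sc_central] mul_sc0 T by blast

lemma sc_pull: "Mul a (Mul (Sc x) b) \<approx> Mul (Sc x) (Mul a b)"
proof -
  have "Mul a (Mul (Sc x) b) \<approx> Mul (Mul a (Sc x)) b" by (rule S, rule eqL.mul_assoc)
  also have "\<dots> \<approx> Mul (Mul (Sc x) a) b" by (rule MCl, rule S, rule eqL.sc_central)
  also have "\<dots> \<approx> Mul (Sc x) (Mul a b)" by (rule eqL.mul_assoc)
  finally show ?thesis .
qed

lemma sc_sc: "z = x * y \<Longrightarrow> Mul (Sc x) (Mul (Sc y) b) \<approx> Mul (Sc z) b"
proof -
  assume z: "z = x * y"
  have "Mul (Sc x) (Mul (Sc y) b) \<approx> Mul (Mul (Sc x) (Sc y)) b" by (rule S, rule eqL.mul_assoc)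
  also have "\<dots> \<approx> Mul (Sc z) b" unfolding z by (rule MCl, rule eqL.sc_mul)
  finally show ?thesis .
qed

lemma add_neg': "Add (Mul (Sc (-1)) b) b \<approx> Sc 0"
  using eqL.add_comm eqL.add_neg T by blast

lemma telescope: "Add (Sub a b) (Sub b c) \<approx> Sub a c"
proof -
  let ?nb = "Mul (Sc (-1)) b" and ?nc = "Mul (Sc (-1)) c"
  have "Add (Add a ?nb) (Add b ?nc) \<approx> Add a (Add ?nb (Add b ?nc))" by (rule eqL.add_assoc)
  also have "\<dots> \<approx> Add a (Add (Add ?nb b) ?nc)" by (rule ACr, rule S, rule eqL.add_assoc)
  also have "\<dots> \<approx> Add a (Add (Sc 0) ?nc)" by (rule ACr, rule ACl, rule add_neg')
  also have "\<dots> \<approx> Add a ?nc" by (rule ACr, rule add_zero_l)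
  finally show ?thesis unfolding Sub_def .
qed

lemma mul_sub_l: "Mul x (Sub a b) \<approx> Sub (Mul x a) (Mul x b)"
proof -
  have "Mul x (Sub a b) \<approx> Add (Mul x a) (Mul x (Mul (Sc (-1)) b))"
    unfolding Sub_def by (rule eqL.distrib_left)
  also have "\<dots> \<approx> Add (Mul x a) (Mul (Sc (-1)) (Mul x b))" by (rule ACr, rule sc_pull)
  finally show ?thesis unfolding Sub_def .
qed

lemma mul_sub_r: "Mul (Sub a b) x \<approx> Sub (Mul a x) (Mul b x)"
proof -
  have "Mul (Sub a b) x \<approx> Add (Mul a x) (Mul (Mul (Sc (-1)) b) x)"
    unfolding Sub_def by (rule eqL.distrib_right)
  also have "\<dots> \<approx> Add (Mul a x) (Mul (Sc (-1)) (Mul b x))" by (rule ACr, rule eqL.mul_assoc)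
  finally show ?thesis unfolding Sub_def .
qed

lemma sub_eq: "Sub a b \<approx> c \<Longrightarrow> a \<approx> Add b c"
proof -
  assume h: "Sub a b \<approx> c"
  let ?nb = "Mul (Sc (-1)) b"
  have "Add b c \<approx> Add b (Add a ?nb)" by (rule ACr, rule S, use h in \<open>simp add: Sub_def\<close>)
  also have "\<dots> \<approx> Add (Add a ?nb) b" by (rule eqL.add_comm)
  also have "\<dots> \<approx> Add a (Add ?nb b)" by (rule eqL.add_assoc)
  also have "\<dots> \<approx> Add a (Sc 0)" by (rule ACr, rule add_neg')
  also have "\<dots> \<approx> a" by (rule eqL.add_zero)
  finally show ?thesis by (rule S)
qed

lemma shuffle: "Add (Add a b) (Add c e) \<approx> Add (Add a c) (Add b e)"
proof -
  have "Add (Add a b) (Add c e) \<approx> Add a (Add b (Add c e))" by (rule eqL.add_assoc)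
  also have "\<dots> \<approx> Add a (Add (Add b c) e)" by (rule ACr, rule S, rule eqL.add_assoc)
  also have "\<dots> \<approx> Add a (Add (Add c b) e)" by (rule ACr, rule ACl, rule eqL.add_comm)
  also have "\<dots> \<approx> Add a (Add c (Add b e))" by (rule ACr, rule eqL.add_assoc)
  also have "\<dots> \<approx> Add (Add a c) (Add b e)" by (rule S, rule eqL.add_assoc)
  finally show ?thesis .
qed

lemma hp0: "hpoly 0 = Sc 0" by (simp add: hpoly_def)

lemma hp_pCons: "hpoly (pCons a p) \<approx> Add (Sc a) (Mul (Gen GH) (hpoly p))"
proof (cases "p = 0 \<and> a = 0")
  case True
  have "Add (Sc 0) (Mul (Gen GH) (Sc 0)) \<approx> Add (Sc 0) (Sc 0)" by (rule ACr, rule mul_0r)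
  also have "\<dots> \<approx> Sc 0" by (rule eqL.add_zero)
  finally show ?thesis using True by (simp add: hp0 S)
next
  case False
  then have "coeffs (pCons a p) = a # coeffs p" by (auto simp: cCons_def)
  then show ?thesis by (simp add: hpoly_def R)
qed

lemma hp_add: "hpoly (p + q) \<approx> Add (hpoly p) (hpoly q)"
proof (induct p arbitrary: q rule: pCons_induct)
  case 0
  then show ?case by (simp add: hp0 S[OF add_zero_l])
next
  case (pCons a p)
  obtain b q' where q: "q = pCons b q'" by (cases q)
  have "hpoly (pCons a p + q) \<approx> Add (Sc (a+b)) (Mul (Gen GH) (hpoly (p+q')))"
    unfolding q add_pCons by (rule hp_pCons)
  also have "\<dots> \<approx> Add (Add (Sc a) (Sc b)) (Mul (Gen GH) (Add (hpoly p) (hpoly q')))"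
    by (rule AC, rule S, rule eqL.sc_add, rule MCr, rule pCons)
  also have "\<dots> \<approx> Add (Add (Sc a) (Sc b)) (Add (Mul (Gen GH) (hpoly p)) (Mul (Gen GH) (hpoly q')))"
    by (rule ACr, rule eqL.distrib_left)
  also have "\<dots> \<approx> Add (Add (Sc a) (Mul (Gen GH) (hpoly p))) (Add (Sc b) (Mul (Gen GH) (hpoly q')))"
    by (rule shuffle)
  also have "\<dots> \<approx> Add (hpoly (pCons a p)) (hpoly q)"
    unfolding q by (rule S, rule AC, rule hp_pCons, rule hp_pCons)
  finally show ?case .
qed

lemma hp_smult: "hpoly (smult c p) \<approx> Mul (Sc c) (hpoly p)"
proof (induct p rule: pCons_induct)
  case 0
  then show ?case by (simp add: hp0 S[OF mul_0r])
next
  case (pCons a p)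
  have "hpoly (smult c (pCons a p)) \<approx> Add (Sc (c*a)) (Mul (Gen GH) (hpoly (smult c p)))"
    unfolding smult_pCons by (rule hp_pCons)
  also have "\<dots> \<approx> Add (Mul (Sc c) (Sc a)) (Mul (Gen GH) (Mul (Sc c) (hpoly p)))"
    by (rule AC, rule S, rule eqL.sc_mul, rule MCr, rule pCons)
  also have "\<dots> \<approx> Add (Mul (Sc c) (Sc a)) (Mul (Sc c) (Mul (Gen GH) (hpoly p)))"
    by (rule ACr, rule sc_pull)
  also have "\<dots> \<approx> Mul (Sc c) (Add (Sc a) (Mul (Gen GH) (hpoly p)))"
    by (rule S, rule eqL.distrib_left)
  also have "\<dots> \<approx> Mul (Sc c) (hpoly (pCons a p))" by (rule MCr, rule S, rule hp_pCons)
  finally show ?case .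
qed

lemma hp_comb: "Add (Mul (hpoly p) X) (Mul (hpoly q) X) \<approx> Mul (hpoly (p + q)) X"
proof -
  have "Add (Mul (hpoly p) X) (Mul (hpoly q) X) \<approx> Mul (Add (hpoly p) (hpoly q)) X"
    by (rule S, rule eqL.distrib_right)
  also have "\<dots> \<approx> Mul (hpoly (p + q)) X" by (rule MCl, rule S, rule hp_add)
  finally show ?thesis .
qed

lemma hp_scX: "Mul (Sc c) (Mul (hpoly p) X) \<approx> Mul (hpoly (smult c p)) X"
proof -
  have "Mul (Sc c) (Mul (hpoly p) X) \<approx> Mul (Mul (Sc c) (hpoly p)) X"
    by (rule S, rule eqL.mul_assoc)
  also have "\<dots> \<approx> Mul (hpoly (smult c p)) X" by (rule MCl, rule S, rule hp_smult)
  finally show ?thesis .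
qed

lemma commute_gen:
  assumes rel: "Mul X (Gen GH) \<approx> Add (Mul (Sc \<alpha>) (Mul (Gen GH) X)) (Mul (Sc \<beta>) X)"
  shows "\<exists>p'. Mul X (hpoly p) \<approx> Mul (hpoly p') X"
proof (induct p rule: pCons_induct)
  case 0
  have "Mul X (hpoly 0) \<approx> Mul (hpoly 0) X"
    unfolding hp0 using mul_0r mul_sc0 S T by blast
  then show ?case by blast
next
  case (pCons a p)
  then obtain p' where IH: "Mul X (hpoly p) \<approx> Mul (hpoly p') X" by blast
  let ?h = "Gen GH" and ?P = "hpoly p" and ?P' = "hpoly p'"
  have "Mul X (hpoly (pCons a p)) \<approx> Mul X (Add (Sc a) (Mul ?h ?P))" by (rule MCr, rule hp_pCons)
  also have "\<dots> \<approx> Add (Mul X (Sc a)) (Mul X (Mul ?h ?P))" by (rule eqL.distrib_left)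
  also have "\<dots> \<approx> Add (Mul (Sc a) X) (Mul (Mul X ?h) ?P)"
    by (rule AC, rule S, rule eqL.sc_central, rule S, rule eqL.mul_assoc)
  also have "\<dots> \<approx> Add (Mul (Sc a) X) (Mul (Add (Mul (Sc \<alpha>) (Mul ?h X)) (Mul (Sc \<beta>) X)) ?P)"
    by (rule ACr, rule MCl, rule rel)
  also have "\<dots> \<approx> Add (Mul (Sc a) X) (Add (Mul (Mul (Sc \<alpha>) (Mul ?h X)) ?P) (Mul (Mul (Sc \<beta>) X) ?P))"
    by (rule ACr, rule eqL.distrib_right)
  also have "\<dots> \<approx> Add (Mul (Sc a) X) (Add (Mul (Sc \<alpha>) (Mul ?h (Mul X ?P))) (Mul (Sc \<beta>) (Mul X ?P)))"
  proof (rule ACr, rule AC)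
    show "Mul (Mul (Sc \<alpha>) (Mul ?h X)) ?P \<approx> Mul (Sc \<alpha>) (Mul ?h (Mul X ?P))"
      using eqL.mul_assoc MCr T by blast
    show "Mul (Mul (Sc \<beta>) X) ?P \<approx> Mul (Sc \<beta>) (Mul X ?P)" by (rule eqL.mul_assoc)
  qed
  also have "\<dots> \<approx> Add (Mul (Sc a) X) (Add (Mul (Sc \<alpha>) (Mul ?h (Mul ?P' X))) (Mul (Sc \<beta>) (Mul ?P' X)))"
    by (rule ACr, rule AC, rule MCr, rule MCr, rule IH, rule MCr, rule IH)
  also have "\<dots> \<approx> Add (Mul (Sc a) X) (Add (Mul (Mul (Sc \<alpha>) (Mul ?h ?P')) X) (Mul (Mul (Sc \<beta>) ?P') X))"
  proof (rule ACr, rule AC)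
    show "Mul (Sc \<alpha>) (Mul ?h (Mul ?P' X)) \<approx> Mul (Mul (Sc \<alpha>) (Mul ?h ?P')) X"
      by (rule T, rule MCr, rule S, rule eqL.mul_assoc, rule S, rule eqL.mul_assoc)
    show "Mul (Sc \<beta>) (Mul ?P' X) \<approx> Mul (Mul (Sc \<beta>) ?P') X" by (rule S, rule eqL.mul_assoc)
  qed
  also have "\<dots> \<approx> Mul (Add (Sc a) (Add (Mul (Sc \<alpha>) (Mul ?h ?P')) (Mul (Sc \<beta>) ?P'))) X"
    by (rule S, rule T, rule eqL.distrib_right, rule ACr, rule eqL.distrib_right)
  also have "\<dots> \<approx> Mul (Add (Add (Sc a) (Mul (Sc \<alpha>) (Mul ?h ?P'))) (Mul (Sc \<beta>) ?P')) X"
    by (rule MCl, rule S, rule eqL.add_assoc)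
  also have "\<dots> \<approx> Mul (Add (Add (Sc a) (Mul ?h (hpoly (smult \<alpha> p')))) (hpoly (smult \<beta> p'))) X"
    by (rule MCl, rule AC, rule ACr, rule T, rule S, rule sc_pull, rule MCr, rule S, rule hp_smult,
        rule S, rule hp_smult)
  also have "\<dots> \<approx> Mul (Add (hpoly (pCons a (smult \<alpha> p'))) (hpoly (smult \<beta> p'))) X"
    by (rule MCl, rule ACl, rule S, rule hp_pCons)
  also have "\<dots> \<approx> Mul (hpoly (pCons a (smult \<alpha> p') + smult \<beta> p')) X"
    by (rule MCl, rule S, rule hp_add)
  finally show ?case by blast
qed

lemma sc_merge: "z = x + y \<Longrightarrow> Add (Mul (Sc x) a) (Mul (Sc y) a) \<approx> Mul (Sc z) a"
proof -
  assume z: "z = x + y"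
  have "Add (Mul (Sc x) a) (Mul (Sc y) a) \<approx> Mul (Add (Sc x) (Sc y)) a" by (rule S, rule eqL.distrib_right)
  also have "\<dots> \<approx> Mul (Sc z) a" unfolding z by (rule MCl, rule eqL.sc_add)
  finally show ?thesis .
qed

lemma rel_d: "Mul (Gen GD) (Gen GH) \<approx> Add (Mul (Sc r) (Mul (Gen GH) (Gen GD))) (Mul (Sc \<gamma>) (Gen GD))"
  by (rule sub_eq, rule eqL.rel_dh)

lemma rel_u:
  assumes r: "r \<noteq> 0"
  shows "Mul (Gen GU) (Gen GH) \<approx> Add (Mul (Sc (1/r)) (Mul (Gen GH) (Gen GU))) (Mul (Sc (-\<gamma>/r)) (Gen GU))"
proof -
  let ?Y = "Mul (Gen GU) (Gen GH)" and ?u = "Gen GU" and ?N = "Mul (Sc (-\<gamma>/r)) (Gen GU)"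
  have hu: "Mul (Gen GH) ?u \<approx> Add (Mul (Sc r) ?Y) (Mul (Sc \<gamma>) ?u)"
    by (rule sub_eq, rule eqL.rel_hu)
  have "Add (Mul (Sc (1/r)) (Mul (Gen GH) ?u)) ?N \<approx> Add (Mul (Sc (1/r)) (Add (Mul (Sc r) ?Y) (Mul (Sc \<gamma>) ?u))) ?N"
    by (rule ACl, rule MCr, rule hu)
  also have "\<dots> \<approx> Add (Add (Mul (Sc (1/r)) (Mul (Sc r) ?Y)) (Mul (Sc (1/r)) (Mul (Sc \<gamma>) ?u))) ?N"
    by (rule ACl, rule eqL.distrib_left)
  also have "\<dots> \<approx> Add (Add (Mul (Sc 1) ?Y) (Mul (Sc (\<gamma>/r)) ?u)) ?N"
    by (rule ACl, rule AC, rule sc_sc, use r in simp, rule sc_sc, simp)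
  also have "\<dots> \<approx> Add (Mul (Sc 1) ?Y) (Add (Mul (Sc (\<gamma>/r)) ?u) ?N)" by (rule eqL.add_assoc)
  also have "\<dots> \<approx> Add ?Y (Mul (Sc 0) ?u)"
    by (rule AC, rule eqL.mul_one_left, rule sc_merge, simp)
  also have "\<dots> \<approx> Add ?Y (Sc 0)" by (rule ACr, rule mul_sc0)
  also have "\<dots> \<approx> ?Y" by (rule eqL.add_zero)
  finally show ?thesis by (rule S)
qed

lemma E3: "\<exists>g. Sub (Mul (pw (Gen GD) (Suc k)) (Gen GU)) (Mul (Sc (s ^ Suc k)) (Mul (Gen GU) (pw (Gen GD) (Suc k))))
            \<approx> Mul (hpoly g) (pw (Gen GD) k)"
proof (induct k)
  case 0
  let ?d = "Gen GD" and ?u = "Gen GU"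
  have "Sub (Mul (Mul ?d (Sc 1)) ?u) (Mul (Sc s) (Mul ?u (Mul ?d (Sc 1)))) \<approx> Sub (Mul ?d ?u) (Mul (Sc s) (Mul ?u ?d))"
    by (rule sub_cong, rule MCl, rule eqL.mul_one_right, rule MCr, rule MCr, rule eqL.mul_one_right)
  also have "\<dots> \<approx> hpoly \<phi>" by (rule eqL.rel_du)
  also have "\<dots> \<approx> Mul (hpoly \<phi>) (Sc 1)" by (rule S, rule eqL.mul_one_right)
  finally show ?case by auto
next
  case (Suc k)
  let ?d = "Gen GD" and ?u = "Gen GU" and ?h = "Gen GH"
  let ?m = "Suc k"
  let ?Dm = "pw ?d ?m" and ?sm = "s ^ ?m"
  let ?Em = "Sub (Mul ?Dm ?u) (Mul (Sc ?sm) (Mul ?u ?Dm))"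
  let ?R = "Sub (Mul ?d ?u) (Mul (Sc s) (Mul ?u ?d))"
  obtain g where IH: "?Em \<approx> Mul (hpoly g) (pw ?d k)" using Suc by blast
  obtain g' where cm: "Mul ?d (hpoly g) \<approx> Mul (hpoly g') ?d"
    using commute_gen[OF rel_d] by blast
  let ?A = "Mul (Mul ?d ?Dm) ?u" and ?B = "Mul (Sc ?sm) (Mul (Mul ?d ?u) ?Dm)"
    and ?C = "Mul (Sc (s ^ Suc ?m)) (Mul ?u (Mul ?d ?Dm))"
  have 1: "Mul ?d ?Em \<approx> Sub ?A ?B"
  proof -
    have "Mul ?d ?Em \<approx> Sub (Mul ?d (Mul ?Dm ?u)) (Mul ?d (Mul (Sc ?sm) (Mul ?u ?Dm)))" by (rule mul_sub_l)
    also have "\<dots> \<approx> Sub ?A ?B"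
      by (rule sub_cong, rule S, rule eqL.mul_assoc, rule T, rule sc_pull, rule MCr, rule S, rule eqL.mul_assoc)
    finally show ?thesis .
  qed
  have 2: "Mul (Sc ?sm) (Mul ?R ?Dm) \<approx> Sub ?B ?C"
  proof -
    have "Mul (Sc ?sm) (Mul ?R ?Dm) \<approx> Mul (Sc ?sm) (Sub (Mul (Mul ?d ?u) ?Dm) (Mul (Mul (Sc s) (Mul ?u ?d)) ?Dm))"
      by (rule MCr, rule mul_sub_r)
    also have "\<dots> \<approx> Sub ?B (Mul (Sc ?sm) (Mul (Mul (Sc s) (Mul ?u ?d)) ?Dm))" by (rule mul_sub_l)
    also have "\<dots> \<approx> Sub ?B ?C"
    proof (rule sub_cong, rule R)
      have "Mul (Sc ?sm) (Mul (Mul (Sc s) (Mul ?u ?d)) ?Dm) \<approx> Mul (Sc ?sm) (Mul (Sc s) (Mul (Mul ?u ?d) ?Dm))"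
        by (rule MCr, rule eqL.mul_assoc)
      also have "\<dots> \<approx> Mul (Sc (s ^ Suc ?m)) (Mul (Mul ?u ?d) ?Dm)" by (rule sc_sc, simp)
      also have "\<dots> \<approx> ?C" by (rule MCr, rule eqL.mul_assoc)
      finally show "Mul (Sc ?sm) (Mul (Mul (Sc s) (Mul ?u ?d)) ?Dm) \<approx> ?C" .
    qed
    finally show ?thesis .
  qed
  have "Sub (Mul (pw ?d (Suc ?m)) ?u) (Mul (Sc (s ^ Suc ?m)) (Mul ?u (pw ?d (Suc ?m)))) \<approx> Add (Sub ?A ?B) (Sub ?B ?C)"
    by (simp, rule S, rule telescope)
  also have "\<dots> \<approx> Add (Mul ?d ?Em) (Mul (Sc ?sm) (Mul ?R ?Dm))" by (rule AC, rule S, rule 1, rule S, rule 2)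
  also have "\<dots> \<approx> Add (Mul (hpoly g') ?Dm) (Mul (hpoly (smult ?sm \<phi>)) ?Dm)"
  proof (rule AC)
    have "Mul ?d ?Em \<approx> Mul ?d (Mul (hpoly g) (pw ?d k))" by (rule MCr, rule IH)
    also have "\<dots> \<approx> Mul (Mul ?d (hpoly g)) (pw ?d k)" by (rule S, rule eqL.mul_assoc)
    also have "\<dots> \<approx> Mul (Mul (hpoly g') ?d) (pw ?d k)" by (rule MCl, rule cm)
    also have "\<dots> \<approx> Mul (hpoly g') ?Dm" by (simp, rule eqL.mul_assoc)
    finally show "Mul ?d ?Em \<approx> Mul (hpoly g') ?Dm" .
    have "Mul (Sc ?sm) (Mul ?R ?Dm) \<approx> Mul (Sc ?sm) (Mul (hpoly \<phi>) ?Dm)" by (rule MCr, rule MCl, rule eqL.rel_du)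
    also have "\<dots> \<approx> Mul (hpoly (smult ?sm \<phi>)) ?Dm" by (rule hp_scX)
    finally show "Mul (Sc ?sm) (Mul ?R ?Dm) \<approx> Mul (hpoly (smult ?sm \<phi>)) ?Dm" .
  qed
  also have "\<dots> \<approx> Mul (hpoly (g' + smult ?sm \<phi>)) ?Dm" by (rule hp_comb)
  finally show ?case by blast
qed

lemma F4:
  assumes r: "r \<noteq> 0"
  shows "\<exists>g. Sub (Mul (Gen GD) (pw (Gen GU) (Suc k))) (Mul (Sc (s ^ Suc k)) (Mul (pw (Gen GU) (Suc k)) (Gen GD)))
            \<approx> Mul (hpoly g) (pw (Gen GU) k)"
proof (induct k)
  case 0
  let ?d = "Gen GD" and ?u = "Gen GU"
  have "Sub (Mul ?d (Mul ?u (Sc 1))) (Mul (Sc s) (Mul (Mul ?u (Sc 1)) ?d)) \<approx> Sub (Mul ?d ?u) (Mul (Sc s) (Mul ?u ?d))"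
    by (rule sub_cong, rule MCr, rule eqL.mul_one_right, rule MCr, rule MCl, rule eqL.mul_one_right)
  also have "\<dots> \<approx> hpoly \<phi>" by (rule eqL.rel_du)
  also have "\<dots> \<approx> Mul (hpoly \<phi>) (Sc 1)" by (rule S, rule eqL.mul_one_right)
  finally show ?case by auto
next
  case (Suc k)
  let ?d = "Gen GD" and ?u = "Gen GU" and ?h = "Gen GH"
  let ?m = "Suc k"
  let ?Vm = "pw ?u ?m" and ?sm = "s ^ ?m"
  let ?Fm = "Sub (Mul ?d ?Vm) (Mul (Sc ?sm) (Mul ?Vm ?d))"
  let ?R = "Sub (Mul ?d ?u) (Mul (Sc s) (Mul ?u ?d))"
  obtain g where IH: "?Fm \<approx> Mul (hpoly g) (pw ?u k)" using Suc by blast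
  obtain g' where cm: "Mul ?u (hpoly g) \<approx> Mul (hpoly g') ?u"
    using commute_gen[OF rel_u[OF r]] by blast
  let ?A = "Mul ?d (Mul ?u ?Vm)" and ?B = "Mul (Sc s) (Mul ?u (Mul ?d ?Vm))"
    and ?C = "Mul (Sc (s ^ Suc ?m)) (Mul (Mul ?u ?Vm) ?d)"
  have 1: "Mul ?R ?Vm \<approx> Sub ?A ?B"
  proof -
    have "Mul ?R ?Vm \<approx> Sub (Mul (Mul ?d ?u) ?Vm) (Mul (Mul (Sc s) (Mul ?u ?d)) ?Vm)" by (rule mul_sub_r)
    also have "\<dots> \<approx> Sub ?A ?B"
      by (rule sub_cong, rule eqL.mul_assoc, rule T, rule eqL.mul_assoc, rule MCr, rule eqL.mul_assoc)
    finally show ?thesis .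
  qed
  have 2: "Mul (Sc s) (Mul ?u ?Fm) \<approx> Sub ?B ?C"
  proof -
    have "Mul (Sc s) (Mul ?u ?Fm) \<approx> Mul (Sc s) (Sub (Mul ?u (Mul ?d ?Vm)) (Mul ?u (Mul (Sc ?sm) (Mul ?Vm ?d))))"
      by (rule MCr, rule mul_sub_l)
    also have "\<dots> \<approx> Sub ?B (Mul (Sc s) (Mul ?u (Mul (Sc ?sm) (Mul ?Vm ?d))))" by (rule mul_sub_l)
    also have "\<dots> \<approx> Sub ?B ?C"
    proof (rule sub_cong, rule R)
      have "Mul (Sc s) (Mul ?u (Mul (Sc ?sm) (Mul ?Vm ?d))) \<approx> Mul (Sc s) (Mul (Sc ?sm) (Mul ?u (Mul ?Vm ?d)))"
        by (rule MCr, rule sc_pull)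
      also have "\<dots> \<approx> Mul (Sc (s ^ Suc ?m)) (Mul ?u (Mul ?Vm ?d))" by (rule sc_sc, simp)
      also have "\<dots> \<approx> ?C" by (rule MCr, rule S, rule eqL.mul_assoc)
      finally show "Mul (Sc s) (Mul ?u (Mul (Sc ?sm) (Mul ?Vm ?d))) \<approx> ?C" .
    qed
    finally show ?thesis .
  qed
  have "Sub (Mul ?d (pw ?u (Suc ?m))) (Mul (Sc (s ^ Suc ?m)) (Mul (pw ?u (Suc ?m)) ?d)) \<approx> Add (Sub ?A ?B) (Sub ?B ?C)"
    by (simp, rule S, rule telescope)
  also have "\<dots> \<approx> Add (Mul ?R ?Vm) (Mul (Sc s) (Mul ?u ?Fm))" by (rule AC, rule S, rule 1, rule S, rule 2)
  also have "\<dots> \<approx> Add (Mul (hpoly \<phi>) ?Vm) (Mul (hpoly (smult s g')) ?Vm)"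
  proof (rule AC)
    show "Mul ?R ?Vm \<approx> Mul (hpoly \<phi>) ?Vm" by (rule MCl, rule eqL.rel_du)
    have "Mul (Sc s) (Mul ?u ?Fm) \<approx> Mul (Sc s) (Mul ?u (Mul (hpoly g) (pw ?u k)))" by (rule MCr, rule MCr, rule IH)
    also have "\<dots> \<approx> Mul (Sc s) (Mul (Mul ?u (hpoly g)) (pw ?u k))" by (rule MCr, rule S, rule eqL.mul_assoc)
    also have "\<dots> \<approx> Mul (Sc s) (Mul (Mul (hpoly g') ?u) (pw ?u k))" by (rule MCr, rule MCl, rule cm)
    also have "\<dots> \<approx> Mul (Sc s) (Mul (hpoly g') ?Vm)" by (rule MCr, simp, rule eqL.mul_assoc)
    also have "\<dots> \<approx> Mul (hpoly (smult s g')) ?Vm" by (rule hp_scX)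
    finally show "Mul (Sc s) (Mul ?u ?Fm) \<approx> Mul (hpoly (smult s g')) ?Vm" .
  qed
  also have "\<dots> \<approx> Mul (hpoly (\<phi> + smult s g')) ?Vm" by (rule hp_comb)
  finally show ?case by blast
qed

end

locale Lmod =
  fixes \<phi> :: "complex poly" and r s \<gamma> :: complex
    and sc :: "complex \<Rightarrow> 'v \<Rightarrow> 'v::ab_group_add" and U D H :: "'v \<Rightarrow> 'v"
  assumes M: "is_L_module \<phi> r s \<gamma> sc U D H"
begin

sublocale V: vector_space sc using M by (simp add: is_L_module_def)

definition lin :: "('v \<Rightarrow> 'v) \<Rightarrow> bool" where
  "lin f \<longleftrightarrow> (\<forall>x y. f (x + y) = f x + f y) \<and> (\<forall>c x. f (sc c x) = sc c (f x))"

lemma lin_zero: "lin f \<Longrightarrow> f 0 = 0"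
  unfolding lin_def by (metis add_cancel_right_right add_0)

lemma linU: "lin U" and linD: "lin D" and linH: "lin H"
  using M unfolding is_L_module_def lin_def Vector_Spaces.linear_iff by auto

lemma lin_act: "lin (act sc U D H a)"
proof (induct a)
  case (Gen g) then show ?case using linU linD linH by (cases g) auto
next
  case (Sc c) then show ?case
    by (simp add: lin_def V.scale_right_distrib V.scale_left_commute)
next
  case (Add a b) then show ?case
    by (simp add: lin_def V.scale_right_distrib algebra_simps)
next
  case (Mul a b) then show ?case by (simp add: lin_def)
qed

lemma lin_funpow: "lin f \<Longrightarrow> lin (f ^^ n)"
  by (induct n) (auto simp: lin_def)

lemma R1: "H (U v) = sc r (U (H v)) + sc \<gamma> (U v)"
proof -
  have "act sc U D H (Sub (Mul (Gen GH) (Gen GU)) (Mul (Sc r) (Mul (Gen GU) (Gen GH)))) v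
       = act sc U D H (Mul (Sc \<gamma>) (Gen GU)) v" using M unfolding is_L_module_def by simp
  then show ?thesis by (simp add: Sub_def algebra_simps)
qed

lemma R2: "D (H v) = sc r (H (D v)) + sc \<gamma> (D v)"
proof -
  have "act sc U D H (Sub (Mul (Gen GD) (Gen GH)) (Mul (Sc r) (Mul (Gen GH) (Gen GD)))) v
       = act sc U D H (Mul (Sc \<gamma>) (Gen GD)) v" using M unfolding is_L_module_def by simp
  then show ?thesis by (simp add: Sub_def algebra_simps)
qed

lemma R3: "D (U v) = sc s (U (D v)) + act sc U D H (hpoly \<phi>) v"
proof -
  have "act sc U D H (Sub (Mul (Gen GD) (Gen GU)) (Mul (Sc s) (Mul (Gen GU) (Gen GD)))) v
       = act sc U D H (hpoly \<phi>) v" using M unfolding is_L_module_def by simp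
  then show ?thesis by (simp add: Sub_def algebra_simps)
qed

lemma sound: "eqL \<phi> r s \<gamma> a b \<Longrightarrow> act sc U D H a = act sc U D H b"
proof (induct rule: eqL.induct)
  case (distrib_left a b c)
  then show ?case using lin_act[of a] by (auto simp: lin_def)
next
  case (sc_central x a)
  then show ?case using lin_act[of a] by (auto simp: lin_def)
next
  case rel_hu then show ?case using M unfolding is_L_module_def by simp
next
  case rel_dh then show ?case using M unfolding is_L_module_def by simp
next
  case rel_du then show ?case using M unfolding is_L_module_def by simp
qed (auto simp: fun_eq_iff algebra_simps V.scale_left_distrib)

abbreviation P where "P p \<equiv> act sc U D H (hpoly p)"

lemma act_pw: "act sc U D H (pw a n) v = (act sc U D H a ^^ n) v"
  by (induct n arbitrary: v) auto

lemma P0: "P 0 v = 0" by (simp add: hp0)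

lemma PpCons: "P (pCons a p) v = sc a v + H (P p v)"
  using sound[OF hp_pCons] by (simp add: fun_eq_iff)

lemma Padd: "P (p + q) v = P p v + P q v"
  using sound[OF hp_add] by (simp add: fun_eq_iff)

lemma Psmult: "P (smult c p) v = sc c (P p v)"
  using sound[OF hp_smult] by (simp add: fun_eq_iff)

lemma P_eig: "H y = sc \<mu> y \<Longrightarrow> P p y = sc (poly p \<mu>) y"
proof (induct p rule: pCons_induct)
  case 0 then show ?case by (simp add: P0)
next
  case (pCons a p)
  then have "P (pCons a p) y = sc a y + H (sc (poly p \<mu>) y)" by (simp add: PpCons)
  also have "\<dots> = sc a y + sc (poly p \<mu>) (sc \<mu> y)" using linH pCons by (simp add: lin_def)
  also have "\<dots> = sc (poly (pCons a p) \<mu>) y" by (simp add: V.scale_left_distrib algebra_simps)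
  finally show ?case .
qed

lemma P_ker:
  assumes T: "lin T" and TH: "\<forall>y. T y = 0 \<longrightarrow> T (H y) = 0" and y: "T y = 0"
  shows "T (P p y) = 0"
proof (induct p rule: pCons_induct)
  case 0 then show ?case using lin_zero[OF T] by (simp add: P0)
next
  case (pCons a p)
  then show ?case using T TH y by (simp add: PpCons lin_def)
qed

lemma eigen:
  assumes T: "lin T" and TH: "\<forall>y. T y = 0 \<longrightarrow> T (H y) = 0"
  shows "f \<noteq> 0 \<Longrightarrow> T n = 0 \<Longrightarrow> n \<noteq> 0 \<Longrightarrow> P f n = 0 \<Longrightarrow> \<exists>w \<mu>. w \<noteq> 0 \<and> T w = 0 \<and> H w = sc \<mu> w"
proof (induct "degree f" arbitrary: f n rule: less_induct)
  case less
  show ?case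
  proof (cases "degree f = 0")
    case True
    then obtain a where f: "f = pCons a 0" by (rule degree_eq_zeroE)
    with less have a: "a \<noteq> 0" by auto
    have "P f n = sc a n" using lin_zero[OF linH] by (simp add: f PpCons P0)
    with less a show ?thesis by simp
  next
    case False
    then have "\<not> constant (poly f)" using constant_degree[of f] by simp
    then obtain z where "poly f z = 0" using fundamental_theorem_of_algebra by blast
    then have "[:-z,1:] dvd f" using poly_eq_0_iff_dvd by blast
    then obtain g where fg: "f = [:-z,1:] * g" by (rule dvdE)
    have g0: "g \<noteq> 0" using less fg by auto
    have deg: "degree g < degree f" using fg g0 degree_mult_eq [of "[:-z,1:]" g] by simp
    have f2: "f = smult (-z) g + pCons 0 g" using fg by simp
    have Pf: "P f n = sc (-z) (P g n) + H (P g n)"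
      unfolding f2 Padd Psmult PpCons by simp
    show ?thesis
    proof (cases "P g n = 0")
      case True
      then show ?thesis using less(1)[OF deg g0 less(3) less(4)] by blast
    next
      case False
      have "T (P g n) = 0" by (rule P_ker[OF T TH less(3)])
      moreover have "H (P g n) = sc z (P g n)" using Pf less(5) by (simp add: algebra_simps)
      ultimately show ?thesis using False by blast
    qed
  qed
qed


lemma inv_span:
  assumes T: "lin T" and gen: "\<And>y. y \<in> S \<Longrightarrow> T y \<in> V.span S'" and y: "y \<in> V.span S"
  shows "T y \<in> V.span S'"
proof -
  have "V.subspace {y. T y \<in> V.span S'}"
    unfolding V.subspace_def using T lin_zero[OF T]
    by (auto simp: lin_def V.span_zero V.span_add V.span_scale)
  then show ?thesis using V.span_induct[OF y, of "\<lambda>y. T y \<in> V.span S'"] gen by auto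
qed

lemma orbit:
  assumes linA: "lin A" and linB: "lin B"
    and simple: "\<forall>W. V.subspace W \<and> (\<forall>w\<in>W. A w \<in> W \<and> B w \<in> W \<and> H w \<in> W) \<longrightarrow> W = {0} \<or> W = UNIV"
    and w0: "w \<noteq> 0" and Bw: "B w = 0"
    and eig: "\<forall>i. \<exists>\<mu>. H ((A^^i) w) = sc \<mu> ((A^^i) w)"
    and low: "\<forall>i. \<exists>c. B ((A^^Suc i) w) = sc c ((A^^i) w)"
    and nil: "\<forall>v. (B^^m) v = 0"
  shows "\<exists>S. finite S \<and> V.span S = UNIV"
proof -
  define x where "x i = (A^^i) w" for i
  have xS: "x (Suc i) = A (x i)" for i by (simp add: x_def)
  have x0: "x 0 = w" by (simp add: x_def)
  obtain \<mu> where \<mu>: "\<forall>i. H (x i) = sc (\<mu> i) (x i)" using eig unfolding x_def by metis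
  obtain c where c: "\<forall>i. B (x (Suc i)) = sc (c i) (x i)" using low unfolding x_def by metis
  have invW: "\<forall>y\<in>V.span (x ` I). A y \<in> V.span (x ` I) \<and> B y \<in> V.span (x ` I) \<and> H y \<in> V.span (x ` I)"
    if hA: "\<And>i. i \<in> I \<Longrightarrow> A (x i) \<in> V.span (x ` I)" and hB: "\<And>i. i \<in> I \<Longrightarrow> B (x i) \<in> V.span (x ` I)"
    for I
  proof (intro ballI conjI)
    fix y assume y: "y \<in> V.span (x ` I)"
    show "A y \<in> V.span (x ` I)" by (rule inv_span[OF linA _ y]) (auto intro: hA)
    show "B y \<in> V.span (x ` I)" by (rule inv_span[OF linB _ y]) (auto intro: hB)
    show "H y \<in> V.span (x ` I)"
    proof (rule inv_span[OF linH _ y])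
      fix z assume "z \<in> x ` I"
      then obtain i where "i \<in> I" "z = x i" by auto
      then show "H z \<in> V.span (x ` I)" by (metis \<mu> V.span_scale V.span_base imageI)
    qed
  qed
  have full: "V.span (range x) = UNIV"
  proof -
    have "\<forall>y\<in>V.span (x ` UNIV). A y \<in> V.span (x ` UNIV) \<and> B y \<in> V.span (x ` UNIV) \<and> H y \<in> V.span (x ` UNIV)"
    proof (rule invW)
      fix i :: nat
      show "A (x i) \<in> V.span (range x)" unfolding xS[symmetric] by (rule V.span_base) auto
      show "B (x i) \<in> V.span (range x)"
      proof (cases i)
        case 0 then show ?thesis using Bw x0 V.span_zero by simp
      next
        case (Suc j) then show ?thesis using c by (metis V.span_scale V.span_base rangeI)
      qed
    qed
    moreover have "w \<in> V.span (range x)" using x0 by (auto intro: V.span_base)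
    ultimately show ?thesis using simple w0 by blast
  qed
  show ?thesis
  proof (cases "\<exists>n. x n \<in> V.span (x ` {..<n})")
    case True
    then obtain n where n: "x n \<in> V.span (x ` {..<n})" by blast
    let ?T = "V.span (x ` {..<n})"
    have clA: "A y \<in> ?T" if "y \<in> ?T" for y
    proof (rule inv_span[OF linA _ that])
      fix z assume "z \<in> x ` {..<n}"
      then obtain i where i: "i < n" "z = x i" by auto
      show "A z \<in> ?T"
      proof (cases "Suc i < n")
        case True then show ?thesis using i by (auto simp: xS[symmetric] intro: V.span_base)
      next
        case False then have "Suc i = n" using i by auto
        then show ?thesis using i n by (simp add: xS[symmetric])
      qed
    qed
    have all: "x j \<in> ?T" for j
    proof (induct j)
      case 0 then show ?case using n by (cases "n = 0") (auto intro: V.span_base)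
    next
      case (Suc j) then show ?case using clA by (simp add: xS)
    qed
    then have "V.span (range x) \<subseteq> ?T" by (intro V.span_minimal) auto
    then have "?T = UNIV" using full by auto
    then show ?thesis by blast
  next
    case False
    then have indep: "\<And>n. x n \<notin> V.span (x ` {..<n})" by blast
    have pow: "(\<forall>t<j. c (i+t) \<noteq> 0) \<Longrightarrow> \<exists>a. a \<noteq> 0 \<and> (B^^j) (x (i+j)) = sc a (x i)" for i j
    proof (induct j)
      case 0 show ?case by (rule exI[of _ 1]) simp
    next
      case (Suc j)
      then obtain a where a: "a \<noteq> 0" "(B^^j) (x (i+j)) = sc a (x i)" by auto
      have cj: "c (i+j) \<noteq> 0" using Suc by auto
      have "(B^^Suc j) (x (i + Suc j)) = (B^^j) (B (x (Suc (i+j))))"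
        by (simp add: funpow_Suc_right del: funpow.simps)
      also have "\<dots> = (B^^j) (sc (c (i+j)) (x (i+j)))" using c by simp
      also have "\<dots> = sc (c (i+j)) ((B^^j) (x (i+j)))" using lin_funpow[OF linB, of j] by (simp add: lin_def)
      also have "\<dots> = sc (c (i+j) * a) (x i)" using a by simp
      finally have "(B^^Suc j) (x (i + Suc j)) = sc (c (i+j) * a) (x i)" .
      moreover have "c (i+j) * a \<noteq> 0" using a cj by simp
      ultimately show ?case by blast
    qed
    obtain k where k: "k < m" "c k = 0"
    proof (rule ccontr)
      assume "\<not> thesis"
      then have "\<forall>t<m. c (0+t) \<noteq> 0" using that by auto
      then obtain a where "a \<noteq> 0" "(B^^m) (x (0+m)) = sc a (x 0)" using pow by blast
      then show False using nil x0 w0 by simp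
    qed
    let ?K = "Suc k"
    let ?W = "V.span (x ` {?K..})"
    have xK: "x ?K \<noteq> 0" using indep[of ?K] V.span_zero by metis
    have "\<forall>y\<in>?W. A y \<in> ?W \<and> B y \<in> ?W \<and> H y \<in> ?W"
    proof (rule invW)
      fix i assume i: "i \<in> {?K..}"
      show "A (x i) \<in> ?W" using i by (auto simp: xS[symmetric] intro: V.span_base)
      show "B (x i) \<in> ?W"
      proof -
        obtain j where j: "i = Suc j" "k \<le> j" using i by (cases i) auto
        show ?thesis
        proof (cases "j = k")
          case True then show ?thesis using j c k V.span_zero by simp
        next
          case False then have "j \<in> {?K..}" using j by auto
          then show ?thesis using j c by (metis V.span_scale V.span_base imageI)
        qed
      qed
    qed
    moreover have "x ?K \<in> ?W" by (auto intro: V.span_base)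
    ultimately have "?W = UNIV" using simple xK by blast
    then have wW: "w \<in> ?W" by simp
    have "V.subspace {y. \<exists>N. y \<in> V.span (x ` {?K..<N})}"
      unfolding V.subspace_def
    proof (intro conjI ballI allI)
      show "0 \<in> {y. \<exists>N. y \<in> V.span (x ` {?K..<N})}" using V.span_zero by blast
    next
      fix y z assume "y \<in> {y. \<exists>N. y \<in> V.span (x ` {?K..<N})}" "z \<in> {y. \<exists>N. y \<in> V.span (x ` {?K..<N})}"
      then obtain N1 N2 where "y \<in> V.span (x ` {?K..<N1})" "z \<in> V.span (x ` {?K..<N2})" by auto
      moreover have "V.span (x ` {?K..<N1}) \<subseteq> V.span (x ` {?K..<max N1 N2})"
        "V.span (x ` {?K..<N2}) \<subseteq> V.span (x ` {?K..<max N1 N2})"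
        by (auto intro!: V.span_mono image_mono)
      ultimately show "y + z \<in> {y. \<exists>N. y \<in> V.span (x ` {?K..<N})}" by (blast intro: V.span_add)
    next
      fix a y assume "y \<in> {y. \<exists>N. y \<in> V.span (x ` {?K..<N})}"
      then show "sc a y \<in> {y. \<exists>N. y \<in> V.span (x ` {?K..<N})}" by (blast intro: V.span_scale)
    qed
    moreover have "\<exists>N. z \<in> V.span (x ` {?K..<N})" if zz: "z \<in> x ` {?K..}" for z
    proof -
      obtain i where i: "i \<ge> ?K" "z = x i" using zz by auto
      then have "z \<in> x ` {?K..<Suc i}" by auto
      then show ?thesis by (blast intro: V.span_base)
    qed
    ultimately obtain N where N: "w \<in> V.span (x ` {?K..<N})"
      using V.span_induct[OF wW, of "\<lambda>y. \<exists>N. y \<in> V.span (x ` {?K..<N})"] by auto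
    have "x 0 \<notin> V.span (x ` {?K..<N})" for N
    proof (induct N)
      case 0 then show ?case using x0 w0 by simp
    next
      case (Suc N)
      show ?case
      proof (cases "N < ?K")
        case True then have "{?K..<Suc N} = {}" by auto
        then show ?thesis using x0 w0 by simp
      next
        case False
        then have eq: "x ` {?K..<Suc N} = insert (x N) (x ` {?K..<N})" by (auto simp: atLeastLessThanSuc)
        show ?thesis
        proof
          assume "x 0 \<in> V.span (x ` {?K..<Suc N})"
          then have "x N \<in> V.span (insert (x 0) (x ` {?K..<N}))"
            using V.in_span_insert Suc eq by metis
          moreover have "insert (x 0) (x ` {?K..<N}) \<subseteq> x ` {..<N}" using False by auto
          ultimately have "x N \<in> V.span (x ` {..<N})" using V.span_mono by blast
          then show False using indep by blast
        qed
      qed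
    qed
    then show ?thesis using N x0 by simp
  qed
qed

lemma scale_solve: "a \<noteq> 0 \<Longrightarrow> sc a X = sc b Y \<Longrightarrow> X = sc (b / a) Y"
proof -
  assume a: "a \<noteq> 0" and e: "sc a X = sc b Y"
  have "X = sc (1/a) (sc a X)" using a by simp
  also have "\<dots> = sc (1/a) (sc b Y)" using e by simp
  also have "\<dots> = sc (b / a) Y" by simp
  finally show ?thesis .
qed

lemma partD:
  assumes simple: "\<forall>W. V.subspace W \<and> (\<forall>w\<in>W. U w \<in> W \<and> D w \<in> W \<and> H w \<in> W) \<longrightarrow> W = {0} \<or> W = UNIV"
    and m: "m = Suc k" and nil: "\<forall>v. (D^^m) v = 0" and nz: "\<exists>v. (D^^k) v \<noteq> 0"
    and f: "f \<noteq> 0" and ann: "\<forall>v. P f ((D^^k) v) = 0"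
  shows "\<exists>S. finite S \<and> V.span S = UNIV"
proof -
  obtain v where v: "(D^^k) v \<noteq> 0" using nz by blast
  have Dn: "D ((D^^k) v) = 0" using nil[rule_format, of v] m by simp
  have TH: "\<forall>y. D y = 0 \<longrightarrow> D (H y) = 0" using R2 lin_zero[OF linH] by simp
  obtain w \<mu>0 where w: "w \<noteq> 0" "D w = 0" "H w = sc \<mu>0 w"
    using eigen[OF linD TH f Dn v ann[rule_format]] by blast
  have eig: "\<exists>\<mu>. H ((U^^i) w) = sc \<mu> ((U^^i) w)" for i
  proof (induct i)
    case 0 then show ?case using w by auto
  next
    case (Suc i)
    then obtain \<mu> where mu: "H ((U^^i) w) = sc \<mu> ((U^^i) w)" by blast
    have "H ((U^^Suc i) w) = sc r (U (sc \<mu> ((U^^i) w))) + sc \<gamma> (U ((U^^i) w))"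
      using R1 mu by simp
    also have "\<dots> = sc (r * \<mu> + \<gamma>) ((U^^Suc i) w)"
      using linU by (simp add: lin_def V.scale_left_distrib)
    finally show ?case by blast
  qed
  have low: "\<exists>c. D ((U^^Suc i) w) = sc c ((U^^i) w)" for i
  proof (induct i)
    case 0
    have "D (U w) = sc (poly \<phi> \<mu>0) w"
      using R3[of w] w P_eig[OF w(3)] lin_zero[OF linU] by simp
    then show ?case by auto
  next
    case (Suc i)
    then obtain c where c: "D ((U^^Suc i) w) = sc c ((U^^i) w)" by blast
    obtain \<mu> where mu: "H ((U^^Suc i) w) = sc \<mu> ((U^^Suc i) w)" using eig by blast
    have "D ((U^^Suc (Suc i)) w) = sc s (U (sc c ((U^^i) w))) + sc (poly \<phi> \<mu>) ((U^^Suc i) w)"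
      using R3[of "(U^^Suc i) w"] c P_eig[OF mu] by simp
    also have "\<dots> = sc (s * c + poly \<phi> \<mu>) ((U^^Suc i) w)"
      using linU by (simp add: lin_def V.scale_left_distrib)
    finally show ?case by blast
  qed
  show ?thesis by (rule orbit[OF linU linD simple w(1) w(2)]) (use eig low nil in auto)
qed

lemma partU:
  assumes simple: "\<forall>W. V.subspace W \<and> (\<forall>w\<in>W. U w \<in> W \<and> D w \<in> W \<and> H w \<in> W) \<longrightarrow> W = {0} \<or> W = UNIV"
    and rs: "r * s \<noteq> 0"
    and m: "m = Suc k" and nil: "\<forall>v. (U^^m) v = 0" and nz: "\<exists>v. (U^^k) v \<noteq> 0"
    and f: "f \<noteq> 0" and ann: "\<forall>v. P f ((U^^k) v) = 0"
  shows "\<exists>S. finite S \<and> V.span S = UNIV"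
proof -
  have r: "r \<noteq> 0" and s: "s \<noteq> 0" using rs by auto
  obtain v where v: "(U^^k) v \<noteq> 0" using nz by blast
  have Un: "U ((U^^k) v) = 0" using nil[rule_format, of v] m by simp
  have TH: "\<forall>y. U y = 0 \<longrightarrow> U (H y) = 0"
  proof (intro allI impI)
    fix y assume "U y = 0"
    then have "sc r (U (H y)) = sc 0 y" using R1[of y] lin_zero[OF linH] lin_zero[OF linU] by simp
    then show "U (H y) = 0" using r by simp
  qed
  obtain w \<mu>0 where w: "w \<noteq> 0" "U w = 0" "H w = sc \<mu>0 w"
    using eigen[OF linU TH f Un v ann[rule_format]] by blast
  have eig: "\<exists>\<mu>. H ((D^^i) w) = sc \<mu> ((D^^i) w)" for i
  proof (induct i)
    case 0 then show ?case using w by auto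
  next
    case (Suc i)
    then obtain \<mu> where mu: "H ((D^^i) w) = sc \<mu> ((D^^i) w)" by blast
    have "sc \<mu> (D ((D^^i) w)) = sc r (H (D ((D^^i) w))) + sc \<gamma> (D ((D^^i) w))"
      using R2[of "(D^^i) w"] mu linD by (simp add: lin_def)
    then have "sc r (H (D ((D^^i) w))) = sc (\<mu> - \<gamma>) (D ((D^^i) w))"
      by (simp add: algebra_simps V.scale_left_diff_distrib)
    then have "H ((D^^Suc i) w) = sc ((\<mu> - \<gamma>) / r) ((D^^Suc i) w)"
      using scale_solve r by simp
    then show ?case by blast
  qed
  have low: "\<exists>c. U ((D^^Suc i) w) = sc c ((D^^i) w)" for i
  proof (induct i)
    case 0
    have "0 = sc s (U (D w)) + sc (poly \<phi> \<mu>0) w"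
      using R3[of w] w P_eig[OF w(3)] lin_zero[OF linD] by simp
    then have "sc s (U (D w)) = sc (- poly \<phi> \<mu>0) w" by (simp add: eq_neg_iff_add_eq_0)
    then have "U (D w) = sc (- poly \<phi> \<mu>0 / s) w" using scale_solve s by blast
    then have "U ((D^^Suc 0) w) = sc (- poly \<phi> \<mu>0 / s) ((D^^0) w)" by simp
    then show ?case by blast
  next
    case (Suc i)
    then obtain c where c: "U ((D^^Suc i) w) = sc c ((D^^i) w)" by blast
    obtain \<mu> where mu: "H ((D^^Suc i) w) = sc \<mu> ((D^^Suc i) w)" using eig by blast
    have "D (sc c ((D^^i) w)) = sc s (U ((D^^Suc (Suc i)) w)) + sc (poly \<phi> \<mu>) ((D^^Suc i) w)"
      using R3[of "(D^^Suc i) w"] c P_eig[OF mu] by simp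
    then have "sc c ((D^^Suc i) w) = sc s (U ((D^^Suc (Suc i)) w)) + sc (poly \<phi> \<mu>) ((D^^Suc i) w)"
      using linD by (simp add: lin_def)
    then have "sc s (U ((D^^Suc (Suc i)) w)) = sc (c - poly \<phi> \<mu>) ((D^^Suc i) w)"
      by (simp add: algebra_simps V.scale_left_diff_distrib)
    then have "U ((D^^Suc (Suc i)) w) = sc ((c - poly \<phi> \<mu>) / s) ((D^^Suc i) w)"
      using scale_solve s by blast
    then show ?case by blast
  qed
  have simple': "\<forall>W. V.subspace W \<and> (\<forall>w\<in>W. D w \<in> W \<and> U w \<in> W \<and> H w \<in> W) \<longrightarrow> W = {0} \<or> W = UNIV"
    using simple by blast
  show ?thesis by (rule orbit[OF linD linU simple' w(1) w(2)]) (use eig low nil in auto)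
qed
end

theorem mainTheorem4:
  fixes \<phi> :: "complex poly" and r s \<gamma> :: complex
    and sc :: "complex \<Rightarrow> 'v \<Rightarrow> 'v::ab_group_add" and U D H :: "'v \<Rightarrow> 'v" and m :: nat
  assumes "r * s \<noteq> 0"
    and "is_simple_L_module \<phi> r s \<gamma> sc U D H"
    and "m \<ge> 1"
  shows
    "((pw (Gen GD) m \<in> annL sc U D H \<and> pw (Gen GD) (m - 1) \<notin> annL sc U D H \<and>
       (\<exists>f. degree f \<ge> 1 \<and> Mul (hpoly f) (pw (Gen GD) (m - 1)) \<in> annL sc U D H))
        \<longrightarrow> fin_dim_module sc)
   \<and> ((pw (Gen GU) m \<in> annL sc U D H \<and> pw (Gen GU) (m - 1) \<notin> annL sc U D H \<and>
       (\<exists>f. degree f \<ge> 1 \<and> Mul (hpoly f) (pw (Gen GU) (m - 1)) \<in> annL sc U D H))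
        \<longrightarrow> fin_dim_module sc)
   \<and> ((pw (Gen GD) m \<in> annL sc U D H \<and> pw (Gen GD) (m - 1) \<notin> annL sc U D H \<and>
       nonzeroL \<phi> r s \<gamma>
         (Sub (Mul (pw (Gen GD) m) (Gen GU)) (Mul (Sc (s ^ m)) (Mul (Gen GU) (pw (Gen GD) m)))))
        \<longrightarrow> fin_dim_module sc)
   \<and> ((pw (Gen GU) m \<in> annL sc U D H \<and> pw (Gen GU) (m - 1) \<notin> annL sc U D H \<and>
       nonzeroL \<phi> r s \<gamma>
         (Sub (Mul (Gen GD) (pw (Gen GU) m)) (Mul (Sc (s ^ m)) (Mul (pw (Gen GU) m) (Gen GD)))))
        \<longrightarrow> fin_dim_module sc)"
proof -
  interpret Lmod \<phi> r s \<gamma> sc U D H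
    using assms(2) by unfold_locales (simp add: is_simple_L_module_def)
  have simple: "\<forall>W. V.subspace W \<and> (\<forall>w\<in>W. U w \<in> W \<and> D w \<in> W \<and> H w \<in> W) \<longrightarrow> W = {0} \<or> W = UNIV"
    using assms(2) by (simp add: is_simple_L_module_def)
  obtain k where m: "m = Suc k" using assms(3) by (cases m) auto
  have fin: "fin_dim_module sc \<longleftrightarrow> (\<exists>S. finite S \<and> V.span S = UNIV)" by (simp add: fin_dim_module_def)
  have annD: "pw (Gen GD) n \<in> annL sc U D H \<longleftrightarrow> (\<forall>v. (D^^n) v = 0)" for n
    by (simp add: annL_def act_pw)
  have annU: "pw (Gen GU) n \<in> annL sc U D H \<longleftrightarrow> (\<forall>v. (U^^n) v = 0)" for n
    by (simp add: annL_def act_pw)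
  have annMD: "Mul (hpoly f) (pw (Gen GD) n) \<in> annL sc U D H \<longleftrightarrow> (\<forall>v. P f ((D^^n) v) = 0)" for f n
    by (simp add: annL_def act_pw)
  have annMU: "Mul (hpoly f) (pw (Gen GU) n) \<in> annL sc U D H \<longleftrightarrow> (\<forall>v. P f ((U^^n) v) = 0)" for f n
    by (simp add: annL_def act_pw)
  have mk: "m - 1 = k" using m by simp
  have P1: "fin_dim_module sc" if "\<forall>v. (D^^m) v = 0" "\<exists>v. (D^^k) v \<noteq> 0" "f \<noteq> 0" "\<forall>v. P f ((D^^k) v) = 0" for f
    using partD[OF simple m that] fin by blast
  have P2: "fin_dim_module sc" if "\<forall>v. (U^^m) v = 0" "\<exists>v. (U^^k) v \<noteq> 0" "f \<noteq> 0" "\<forall>v. P f ((U^^k) v) = 0" for f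
    using partU[OF simple assms(1) m that] fin by blast
  have r: "r \<noteq> 0" using assms(1) by auto
  show ?thesis
  proof (intro conjI impI)
    assume h: "pw (Gen GD) m \<in> annL sc U D H \<and> pw (Gen GD) (m - 1) \<notin> annL sc U D H \<and>
       (\<exists>f. degree f \<ge> 1 \<and> Mul (hpoly f) (pw (Gen GD) (m - 1)) \<in> annL sc U D H)"
    then obtain f where f: "degree f \<ge> 1" "Mul (hpoly f) (pw (Gen GD) k) \<in> annL sc U D H"
      using mk by auto
    have "f \<noteq> 0" using f by auto
    then show "fin_dim_module sc" using P1 h f annD annMD mk by auto
  next
    assume h: "pw (Gen GU) m \<in> annL sc U D H \<and> pw (Gen GU) (m - 1) \<notin> annL sc U D H \<and>
       (\<exists>f. degree f \<ge> 1 \<and> Mul (hpoly f) (pw (Gen GU) (m - 1)) \<in> annL sc U D H)"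
    then obtain f where f: "degree f \<ge> 1" "Mul (hpoly f) (pw (Gen GU) k) \<in> annL sc U D H"
      using mk by auto
    have "f \<noteq> 0" using f by auto
    then show "fin_dim_module sc" using P2 h f annU annMU mk by auto
  next
    assume h: "pw (Gen GD) m \<in> annL sc U D H \<and> pw (Gen GD) (m - 1) \<notin> annL sc U D H \<and>
       nonzeroL \<phi> r s \<gamma>
         (Sub (Mul (pw (Gen GD) m) (Gen GU)) (Mul (Sc (s ^ m)) (Mul (Gen GU) (pw (Gen GD) m))))"
    have nil: "\<forall>v. (D^^m) v = 0" using h annD by blast
    have nz: "\<exists>v. (D^^k) v \<noteq> 0" using h annD mk by auto
    obtain g where g: "eqL \<phi> r s \<gamma> (Sub (Mul (pw (Gen GD) m) (Gen GU)) (Mul (Sc (s ^ m)) (Mul (Gen GU) (pw (Gen GD) m))))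
        (Mul (hpoly g) (pw (Gen GD) k))" unfolding m using E3 by blast
    show "fin_dim_module sc"
    proof (cases "g = 0")
      case True
      then have "eqL \<phi> r s \<gamma> (Sub (Mul (pw (Gen GD) m) (Gen GU)) (Mul (Sc (s ^ m)) (Mul (Gen GU) (pw (Gen GD) m)))) (Sc 0)"
        using g T[OF _ mul_sc0] by (simp add: hp0)
      then show ?thesis using h by (simp add: nonzeroL_def)
    next
      case False
      have "act sc U D H (Sub (Mul (pw (Gen GD) m) (Gen GU)) (Mul (Sc (s ^ m)) (Mul (Gen GU) (pw (Gen GD) m)))) v = 0" for v
        using nil lin_zero[OF linU] by (simp add: Sub_def act_pw)
      then have "\<forall>v. P g ((D^^k) v) = 0" using sound[OF g] by (simp add: act_pw fun_eq_iff)
      then show ?thesis using P1 nil nz False by blast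
    qed
  next
    assume h: "pw (Gen GU) m \<in> annL sc U D H \<and> pw (Gen GU) (m - 1) \<notin> annL sc U D H \<and>
       nonzeroL \<phi> r s \<gamma>
         (Sub (Mul (Gen GD) (pw (Gen GU) m)) (Mul (Sc (s ^ m)) (Mul (pw (Gen GU) m) (Gen GD))))"
    have nil: "\<forall>v. (U^^m) v = 0" using h annU by blast
    have nz: "\<exists>v. (U^^k) v \<noteq> 0" using h annU mk by auto
    obtain g where g: "eqL \<phi> r s \<gamma> (Sub (Mul (Gen GD) (pw (Gen GU) m)) (Mul (Sc (s ^ m)) (Mul (pw (Gen GU) m) (Gen GD))))
        (Mul (hpoly g) (pw (Gen GU) k))" unfolding m using F4[OF r] by blast
    show "fin_dim_module sc"
    proof (cases "g = 0")
      case True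
      then have "eqL \<phi> r s \<gamma> (Sub (Mul (Gen GD) (pw (Gen GU) m)) (Mul (Sc (s ^ m)) (Mul (pw (Gen GU) m) (Gen GD)))) (Sc 0)"
        using g T[OF _ mul_sc0] by (simp add: hp0)
      then show ?thesis using h by (simp add: nonzeroL_def)
    next
      case False
      have "act sc U D H (Sub (Mul (Gen GD) (pw (Gen GU) m)) (Mul (Sc (s ^ m)) (Mul (pw (Gen GU) m) (Gen GD)))) v = 0" for v
        using nil lin_zero[OF linD] by (simp add: Sub_def act_pw)
      then have "\<forall>v. P g ((U^^k) v) = 0" using sound[OF g] by (simp add: act_pw fun_eq_iff)
      then show ?thesis using P2 nil nz False by blast
    qed
  qed
qed

end
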